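(* For an ideal $\mathcal{I}$ on $\omega$, the following are equivalent: (1) Player I has a winning strategy in the HMM game with respect to $\mathcal{I}$; (2) Player II has a winning strategy in the tallness game with respect to $\mathcal{I}$; (3) $\mathcal{ED}_{\mathrm{fin}}\le_{\mathrm{KB}}\mathcal{I}$.
   Context: Ideals on $\omega$ are assumed to contain all finite sets. $\mathcal{ED}$ is the ideal on $\omega\times\omega$ generated by the vertical lines $\{n\}\times\omega$ and the graphs of functions from $\omega$ to $\omega$. $\Delta=\{(m,n)\in\omega^2: n\le m\}$ and $\mathcal{ED}_{\mathrm{fin}}=\{A\cap\Delta: A\in\mathcal{ED}\}$, an ideal on the countable set $\Delta$. For ideals $\mathcal{J}$ on $X$ and $\mathcal{I}$ on $Y$, $\mathcal{J}\le_{\mathrm{KB}}\mathcal{I}$ means there is a finite-to-one $f:Y\to X$ with $f^{-1}(J)\in\mathcal{I}$ for every $J\in\mathcal{J}$. Tallness game with respect to $\mathcal{I}$: at round $k$, Player I plays $n_k\in\omega$ with $n_0<n_1<\cdots$, then Player II plays $i_k\in\{0,1\}$; Player II wins iff $\{n_k: i_k=1\}$ is infinite and belongs to $\mathcal{I}$. HMM game with respect to $\mathcal{I}$: at round $k$, Player I plays a finite set $F_k\subseteq\omega$, then Player II plays $n_k\in\omega\setminus F_k$; Player I wins iff $\{n_k:k\in\omega\}\in\mathcal{I}$. *)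

theory Defs
  imports Main
begin

definition is_ideal :: "'a set \<Rightarrow> 'a set set \<Rightarrow> bool" where
  "is_ideal X I \<longleftrightarrow>
     I \<subseteq> Pow X
   \<and> (\<forall>A B. A \<in> I \<longrightarrow> B \<subseteq> A \<longrightarrow> B \<in> I)
   \<and> (\<forall>A\<in>I. \<forall>B\<in>I. A \<union> B \<in> I)
   \<and> (\<forall>F. F \<subseteq> X \<longrightarrow> finite F \<longrightarrow> F \<in> I)
   \<and> X \<notin> I"

definition ED :: "(nat \<times> nat) set set" where
  "ED = {A. \<exists>(V :: nat set) (F :: (nat \<Rightarrow> nat) set). finite V \<and> finite F \<and>
            A \<subseteq> (\<Union>n\<in>V. {n} \<times> UNIV) \<union> (\<Union>f\<in>F. {(m, f m) | m. True})}"

definition Delta :: "(nat \<times> nat) set" where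
  "Delta = {(m, n). n \<le> m}"

definition ED_fin :: "(nat \<times> nat) set set" where
  "ED_fin = {A \<inter> Delta | A. A \<in> ED}"

definition KB_le :: "'a set \<Rightarrow> 'a set set \<Rightarrow> 'b set \<Rightarrow> 'b set set \<Rightarrow> bool" where
  "KB_le X J Y I \<longleftrightarrow> (\<exists>f :: 'b \<Rightarrow> 'a.
      (\<forall>y\<in>Y. f y \<in> X)
    \<and> (\<forall>x\<in>X. finite {y\<in>Y. f y = x})
    \<and> (\<forall>A\<in>J. {y\<in>Y. f y \<in> A} \<in> I))"

text \<open>HMM game: a strategy for Player I maps the list of Player II's previous
moves to a finite set; it is winning if every play consistent with it
(Player II always plays outside the current finite set) yields a set in I.\<close>
definition HMM_I_winning_strategy :: "nat set set \<Rightarrow> (nat list \<Rightarrow> nat set) \<Rightarrow> bool" where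
  "HMM_I_winning_strategy I \<sigma> \<longleftrightarrow>
     (\<forall>s. finite (\<sigma> s))
   \<and> (\<forall>n :: nat \<Rightarrow> nat. (\<forall>k. n k \<notin> \<sigma> (map n [0..<k])) \<longrightarrow> range n \<in> I)"

definition HMM_I_wins :: "nat set set \<Rightarrow> bool" where
  "HMM_I_wins I \<longleftrightarrow> (\<exists>\<sigma>. HMM_I_winning_strategy I \<sigma>)"

text \<open>Tallness game: a strategy for Player II maps the list of Player I's moves
n_0,...,n_k (strictly increasing) to i_k; it is winning if for every strictly
increasing play of Player I the set of selected n_k is infinite and in I.\<close>
definition tall_II_winning_strategy :: "nat set set \<Rightarrow> (nat list \<Rightarrow> bool) \<Rightarrow> bool" where
  "tall_II_winning_strategy I \<tau> \<longleftrightarrow>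
     (\<forall>n :: nat \<Rightarrow> nat. strict_mono n \<longrightarrow>
        (let S = {n k | k. \<tau> (map n [0..<Suc k])} in infinite S \<and> S \<in> I))"

definition tall_II_wins :: "nat set set \<Rightarrow> bool" where
  "tall_II_wins I \<longleftrightarrow> (\<exists>\<tau>. tall_II_winning_strategy I \<tau>)"

end

theory Submission
  imports Defs "HOL-Library.Infinite_Set"
begin


lemma idl_sub: "is_ideal UNIV I \<Longrightarrow> A \<in> I \<Longrightarrow> B \<subseteq> A \<Longrightarrow> B \<in> I"
  unfolding is_ideal_def by blast
lemma idl_un: "is_ideal UNIV I \<Longrightarrow> A \<in> I \<Longrightarrow> B \<in> I \<Longrightarrow> A \<union> B \<in> I"
  unfolding is_ideal_def by blast
lemma idl_fin: "is_ideal UNIV I \<Longrightarrow> finite F \<Longrightarrow> F \<in> I"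
  unfolding is_ideal_def by blast
lemma idl_Un_fin: assumes "is_ideal UNIV I" "finite F" "\<And>x. x \<in> F \<Longrightarrow> A x \<in> I"
  shows "(\<Union>x\<in>F. A x) \<in> I"
  using assms(2,3)
proof (induction F rule: finite_induct)
  case empty then show ?case using idl_fin[OF assms(1)] by simp
next
  case (insert x F) then show ?case using idl_un[OF assms(1)] by simp
qed

definition limf :: "(nat \<Rightarrow> 'a list) \<Rightarrow> nat \<Rightarrow> 'a" where
  "limf L j = L (LEAST k. j < length (L k)) ! j"

lemma chain_prefix:
  assumes "\<And>k. \<exists>r. L (Suc k) = L k @ r" and "k \<le> k'"
  shows "\<exists>r. L k' = L k @ r"
  using assms(2)
proof (induction k' rule: dec_induct)
  case base then show ?case by simp
next
  case (step n) then show ?case using assms(1)[of n] by (metis append.assoc)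
qed

lemma limf_nth:
  assumes ch: "\<And>k. \<exists>r. L (Suc k) = L k @ r" and "j < length (L k)"
  shows "limf L j = L k ! j"
proof -
  let ?k0 = "LEAST k. j < length (L k)"
  have k0: "j < length (L ?k0)" by (rule LeastI) (rule assms(2))
  show ?thesis
  proof (cases "?k0 \<le> k")
    case True
    then obtain r where "L k = L ?k0 @ r" using chain_prefix[where L=L, OF ch] by blast
    then show ?thesis using k0 by (simp add: limf_def nth_append)
  next
    case False
    then obtain r where "L ?k0 = L k @ r" using chain_prefix[where L=L and k=k and k'="?k0", OF ch] by auto
    then show ?thesis using assms(2) by (simp add: limf_def nth_append)
  qed
qed

lemma limf_map:
  assumes ch: "\<And>k. \<exists>r. L (Suc k) = L k @ r" and "m \<le> length (L k)"
  shows "map (limf L) [0..<m] = take m (L k)"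
  by (rule nth_equalityI) (use assms in \<open>auto simp: limf_nth[where L=L, OF ch]\<close>)

lemma limf_mono:
  assumes ch: "\<And>k. \<exists>r. L (Suc k) = L k @ r" and srt: "\<And>k. sorted_wrt (<) (L k)"
    and len: "\<And>j. \<exists>k. j < length (L k)"
  shows "strict_mono (limf L)"
unfolding strict_mono_Suc_iff
proof
  fix j
  obtain k where k: "Suc j < length (L k)" using len by blast
  show "limf L j < limf L (Suc j)"
    using k srt[of k] by (simp add: limf_nth[where L=L and k=k, OF ch] sorted_wrt_iff_nth_less)
qed



lemma Delta_col_finite: "finite {d \<in> Delta. fst d \<le> C}"
  by (rule finite_subset[of _ "{..C} \<times> {..C}"]) (auto simp: Delta_def)

lemma KB_fib_col:
  assumes fD: "\<forall>y. f y \<in> Delta" and fib: "\<forall>x\<in>Delta. finite {y. f y = x}"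
  shows "finite {y. fst (f y) \<le> C}"
proof -
  have "{y. fst (f y) \<le> C} = (\<Union>d\<in>{d \<in> Delta. fst d \<le> C}. {y. f y = d})" using fD by auto
  then show ?thesis using Delta_col_finite fib by auto
qed

lemma graph_EDfin: "{(m, g m) | m. True} \<inter> Delta \<in> ED_fin"
  unfolding ED_fin_def ED_def
  by (rule CollectI, rule exI[of _ "{(m, g m) | m. True}"], auto intro!: exI[of _ "{}"] exI[of _ "{g}"])

lemma three_two:
  assumes idl: "is_ideal UNIV I" and kb: "KB_le Delta ED_fin UNIV I"
  shows "tall_II_wins I"
proof -
  obtain f where fD: "\<forall>y. f y \<in> Delta" and fib: "\<forall>x\<in>Delta. finite {y. f y = x}"
     and pre: "\<forall>A\<in>ED_fin. {y. f y \<in> A} \<in> I" using kb unfolding KB_le_def by auto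
  define c where "c y = fst (f y)" for y
  define \<tau> where "\<tau> xs = (\<forall>x\<in>set (butlast xs). c x < c (last xs))" for xs
  have "tall_II_winning_strategy I \<tau>"
  unfolding tall_II_winning_strategy_def Let_def
  proof (intro allI impI conjI)
    fix n :: "nat \<Rightarrow> nat" assume sm: "strict_mono n"
    let ?S = "{n k |k. \<tau> (map n [0..<Suc k])}"
    have tau_iff: "\<tau> (map n [0..<Suc k]) \<longleftrightarrow> (\<forall>j<k. c (n j) < c (n k))" for k
      by (auto simp: \<tau>_def)
    have colfin: "finite {k. c (n k) \<le> C}" for C
    proof -
      have "finite {y. c y \<le> C}" using KB_fib_col[OF fD fib] by (simp add: c_def)
      then have "finite (n -` {y. c y \<le> C})" using strict_mono_imp_inj_on[OF sm] by (intro finite_vimageI) auto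
      then show ?thesis by (simp add: vimage_def)
    qed
    have unb: "\<exists>k>K. \<tau> (map n [0..<Suc k])" for K
    proof -
      define C where "C = Max (c ` n ` {..K})"
      have ex: "\<exists>k. C < c (n k)"
      proof (rule ccontr)
        assume "\<not> ?thesis"
        then have "{k. c (n k) \<le> C} = UNIV" using not_le by blast
        with colfin[of C] show False by simp
      qed
      define k0 where "k0 = (LEAST k. C < c (n k))"
      have k0: "C < c (n k0)" unfolding k0_def using ex by (rule LeastI_ex)
      have small: "j \<le> K \<Longrightarrow> c (n j) \<le> C" for j unfolding C_def by (rule Max_ge) auto
      have lt: "j < k0 \<Longrightarrow> c (n j) \<le> C" for j using not_less_Least[of j "\<lambda>k. C < c (n k)"] k0_def by force
      have "K < k0" using k0 small by (meson not_le leD)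
      moreover have "\<tau> (map n [0..<Suc k0])" unfolding tau_iff using lt k0 by (meson le_less_trans)
      ultimately show ?thesis by blast
    qed
    show "infinite ?S"
      unfolding infinite_nat_iff_unbounded
    proof
      fix m
      obtain k where "k > m" "\<tau> (map n [0..<Suc k])" using unb by blast
      moreover have "k \<le> n k" using sm by (simp add: strict_mono_imp_increasing)
      ultimately show "\<exists>y>m. y \<in> ?S" by (intro exI[of _ "n k"]) auto
    qed
    have uniq: "y \<in> ?S \<Longrightarrow> y' \<in> ?S \<Longrightarrow> c y = c y' \<Longrightarrow> y = y'" for y y'
    proof -
      assume "y \<in> ?S" "y' \<in> ?S" "c y = c y'"
      then obtain k k' where "y = n k" "y' = n k'" "\<tau> (map n [0..<Suc k])" "\<tau> (map n [0..<Suc k'])" by blast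
      then show "y = y'" using \<open>c y = c y'\<close> unfolding tau_iff by (metis less_irrefl nat_neq_iff)
    qed
    define g where "g m = snd (f (SOME y. y \<in> ?S \<and> c y = m))" for m
    have "?S \<subseteq> {y. f y \<in> {(m, g m) | m. True} \<inter> Delta}"
    proof
      fix y assume y: "y \<in> ?S"
      have "(SOME y'. y' \<in> ?S \<and> c y' = c y) \<in> ?S \<and> c (SOME y'. y' \<in> ?S \<and> c y' = c y) = c y"
        by (rule someI[of _ y]) (use y in auto)
      then have "(SOME y'. y' \<in> ?S \<and> c y' = c y) = y" using uniq y by blast
      then have "g (c y) = snd (f y)" by (simp add: g_def)
      then have "f y = (c y, g (c y))" by (simp add: c_def)
      then show "y \<in> {y. f y \<in> {(m, g m) | m. True} \<inter> Delta}" using fD by auto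
    qed
    moreover have "{y. f y \<in> {(m, g m) | m. True} \<inter> Delta} \<in> I" using pre graph_EDfin by blast
    ultimately show "?S \<in> I" using idl_sub[OF idl] by blast
  qed
  then show ?thesis unfolding tall_II_wins_def by blast
qed



definition Ub :: "(nat list \<Rightarrow> nat set) \<Rightarrow> nat \<Rightarrow> nat set" where
  "Ub \<sigma> B = (\<Union>s\<in>{s. set s \<subseteq> {..<B} \<and> length s \<le> B}. \<sigma> s)"

fun bb :: "(nat list \<Rightarrow> nat set) \<Rightarrow> nat \<Rightarrow> nat" where
  "bb \<sigma> 0 = 0" | "bb \<sigma> (Suc m) = Suc (Max (insert (bb \<sigma> m) (Ub \<sigma> (bb \<sigma> m))))"

definition col :: "(nat list \<Rightarrow> nat set) \<Rightarrow> nat \<Rightarrow> nat" where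
  "col \<sigma> y = (LEAST j. y < bb \<sigma> j)"

context fixes \<sigma> :: "nat list \<Rightarrow> nat set" assumes fin: "\<And>s. finite (\<sigma> s)"
begin

lemma Ub_finite: "finite (Ub \<sigma> B)"
  unfolding Ub_def using fin finite_lists_length_le[of "{..<B}" B] by auto

lemma bb_U: "x \<in> Ub \<sigma> (bb \<sigma> m) \<Longrightarrow> x < bb \<sigma> (Suc m)"
  using Ub_finite by (simp add: le_imp_less_Suc)

lemma bb_less: "bb \<sigma> m < bb \<sigma> (Suc m)"
  using Ub_finite by (simp add: le_imp_less_Suc)

lemma bb_sm: "strict_mono (bb \<sigma>)"
  unfolding strict_mono_Suc_iff using bb_less by blast

lemma bb_ge: "m \<le> bb \<sigma> m"
  using bb_sm by (simp add: strict_mono_imp_increasing)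

lemma bb_mono: "m \<le> m' \<Longrightarrow> bb \<sigma> m \<le> bb \<sigma> m'"
  using bb_sm by (simp add: strict_mono_less_eq)

lemma col_ex: "\<exists>j. y < bb \<sigma> j"
  using bb_ge[of "Suc y"] by (intro exI[of _ "Suc y"]) simp

lemma col_less: "y < bb \<sigma> (col \<sigma> y)"
  unfolding col_def using col_ex by (rule LeastI_ex)

lemma col_pos: "1 \<le> col \<sigma> y"
  using col_less[of y] by (cases "col \<sigma> y") auto

lemma col_lower: "bb \<sigma> (col \<sigma> y - 1) \<le> y"
proof -
  have "col \<sigma> y - 1 < col \<sigma> y" using col_pos[of y] by simp
  then have "\<not> y < bb \<sigma> (col \<sigma> y - 1)" unfolding col_def by (rule not_less_Least)
  then show ?thesis by simp
qed

lemma col_mono: "y \<le> y' \<Longrightarrow> col \<sigma> y \<le> col \<sigma> y'"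
  unfolding col_def[of \<sigma> y] using col_less[of y'] by (intro Least_le) simp

lemma sel_in_I:
  assumes idl: "is_ideal UNIV I"
    and win: "\<forall>n. (\<forall>k. n k \<notin> \<sigma> (map n [0..<k])) \<longrightarrow> range n \<in> I"
    and T2: "\<forall>y\<in>T. 2 \<le> col \<sigma> y"
    and Tsep: "\<forall>y\<in>T. \<forall>y'\<in>T. y < y' \<longrightarrow> col \<sigma> y + 2 \<le> col \<sigma> y'"
  shows "T \<in> I"
proof (cases "finite T")
  case True then show ?thesis using idl_fin[OF idl] by blast
next
  case False
  define e where "e = enumerate T"
  have sm: "strict_mono e" unfolding e_def using False by (rule strict_mono_enumerate)
  have rng: "range e = T" unfolding e_def using False by (rule range_enumerate)
  have eT: "e k \<in> T" for k using rng by blast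
  have cbig: "2 * k + 2 \<le> col \<sigma> (e k)" for k
  proof (induction k)
    case 0
    have "2 \<le> col \<sigma> (e 0)" using T2 eT by blast
    then show ?case by simp
  next
    case (Suc k)
    have "e k < e (Suc k)" using sm by (simp add: strict_mono_def)
    then have "col \<sigma> (e k) + 2 \<le> col \<sigma> (e (Suc k))" using Tsep eT by blast
    then show ?case using Suc by simp
  qed
  have "e k \<notin> \<sigma> (map e [0..<k])" for k
  proof
    assume H: "e k \<in> \<sigma> (map e [0..<k])"
    define M where "M = col \<sigma> (e k) - 2"
    have "set (map e [0..<k]) \<subseteq> {..<bb \<sigma> M}"
    proof
      fix x assume "x \<in> set (map e [0..<k])"
      then obtain j where j: "j < k" "x = e j" by auto
      then have "e j < e k" using sm by (simp add: strict_mono_def)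
      then have "col \<sigma> (e j) + 2 \<le> col \<sigma> (e k)" using Tsep eT by blast
      then have "col \<sigma> (e j) \<le> M" by (simp add: M_def)
      then have "e j < bb \<sigma> M" using col_less[of "e j"] bb_mono by (meson less_le_trans)
      then show "x \<in> {..<bb \<sigma> M}" using j by simp
    qed
    moreover have "length (map e [0..<k]) \<le> bb \<sigma> M"
      using cbig[of k] bb_ge[of M] by (simp add: M_def)
    ultimately have "e k \<in> Ub \<sigma> (bb \<sigma> M)" unfolding Ub_def using H by blast
    then have "e k < bb \<sigma> (Suc M)" by (rule bb_U)
    moreover have "Suc M = col \<sigma> (e k) - 1" using cbig[of k] by (simp add: M_def)
    ultimately show False using col_lower[of "e k"] by simp
  qed
  then have "range e \<in> I" using win by blast
  then show ?thesis using rng by simp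
qed

end

lemma par2: "(a::nat) \<le> b \<Longrightarrow> a \<noteq> b \<Longrightarrow> even a = even b \<Longrightarrow> a + 2 \<le> b"
  by presburger

lemma one_three:
  assumes idl: "is_ideal UNIV I" and hmm: "HMM_I_wins I"
  shows "KB_le Delta ED_fin UNIV I"
proof -
  obtain \<sigma> where fin: "\<And>s. finite (\<sigma> s)"
    and win: "\<forall>n. (\<forall>k. n k \<notin> \<sigma> (map n [0..<k])) \<longrightarrow> range n \<in> I"
    using hmm unfolding HMM_I_wins_def HMM_I_winning_strategy_def by blast
  define h where "h y = bb \<sigma> (col \<sigma> y)" for y
  define f where "f y = (h y, y)" for y
  have hy: "y < h y" for y unfolding h_def using col_less[where \<sigma>=\<sigma>, OF fin] .
  have G: "{y. g (h y) = y} \<in> I" for g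
  proof -
    let ?G = "{y. g (h y) = y}"
    have sep: "col \<sigma> y + 2 \<le> col \<sigma> y'" if "y \<in> ?G" "y' \<in> ?G" "y < y'"
      "even (col \<sigma> y) = even (col \<sigma> y')" for y y'
    proof -
      have "col \<sigma> y \<le> col \<sigma> y'" using col_mono[where \<sigma>=\<sigma>, OF fin] that(3) by simp
      moreover have "col \<sigma> y \<noteq> col \<sigma> y'"
      proof
        assume "col \<sigma> y = col \<sigma> y'"
        then have "h y = h y'" by (simp add: h_def)
        then show False using that by auto
      qed
      ultimately show ?thesis using that(4) par2 by blast
    qed
    have A: "{y\<in>?G. col \<sigma> y < 2} \<in> I"
    proof -
      have "y < bb \<sigma> 1" if "col \<sigma> y < 2" for y
      proof -
        have "bb \<sigma> (col \<sigma> y) \<le> bb \<sigma> 1" using that bb_mono[where \<sigma>=\<sigma>, OF fin, of "col \<sigma> y" 1] by simp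
        then show ?thesis using col_less[where \<sigma>=\<sigma>, OF fin, of y] by simp
      qed
      then have "{y\<in>?G. col \<sigma> y < 2} \<subseteq> {..<bb \<sigma> 1}" by auto
      then show ?thesis using idl_fin[OF idl] finite_subset by blast
    qed
    have B: "{y\<in>?G. 2 \<le> col \<sigma> y \<and> even (col \<sigma> y)} \<in> I"
      by (rule sel_in_I[where \<sigma>=\<sigma>, OF fin idl win]) (use sep in auto)
    have C: "{y\<in>?G. 2 \<le> col \<sigma> y \<and> odd (col \<sigma> y)} \<in> I"
      by (rule sel_in_I[where \<sigma>=\<sigma>, OF fin idl win]) (use sep in auto)
    have "?G = {y\<in>?G. col \<sigma> y < 2} \<union> {y\<in>?G. 2 \<le> col \<sigma> y \<and> even (col \<sigma> y)}
               \<union> {y\<in>?G. 2 \<le> col \<sigma> y \<and> odd (col \<sigma> y)}" (is "_ = ?R") by auto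
    moreover have "?R \<in> I" by (intro idl_un[OF idl] A B C)
    ultimately show ?thesis by argo
  qed
  have "\<forall>y. f y \<in> Delta" using hy by (auto simp: f_def Delta_def less_imp_le)
  moreover have "\<forall>x\<in>Delta. finite {y. f y = x}"
  proof
    fix x show "finite {y. f y = x}" by (rule finite_subset[of _ "{snd x}"]) (auto simp: f_def)
  qed
  moreover have "\<forall>A\<in>ED_fin. {y. f y \<in> A} \<in> I"
  proof
    fix A assume "A \<in> ED_fin"
    then obtain A0 V F where A: "A = A0 \<inter> Delta" and V: "finite V" and F: "finite F"
      and A0: "A0 \<subseteq> (\<Union>n\<in>V. {n} \<times> UNIV) \<union> (\<Union>g\<in>F. {(m, g m) | m. True})"
      unfolding ED_fin_def ED_def by blast
    have "{y. f y \<in> A} \<subseteq> (\<Union>n\<in>V. {..n}) \<union> (\<Union>g\<in>F. {y. g (h y) = y})"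
    proof
      fix y assume "y \<in> {y. f y \<in> A}"
      then have "(h y, y) \<in> A0" using A by (simp add: f_def)
      then show "y \<in> (\<Union>n\<in>V. {..n}) \<union> (\<Union>g\<in>F. {y. g (h y) = y})"
      proof -
        have "(h y, y) \<in> (\<Union>n\<in>V. {n} \<times> UNIV) \<union> (\<Union>g\<in>F. {(m, g m) | m. True})"
          using A0 \<open>(h y, y) \<in> A0\<close> by blast
        then have "h y \<in> V \<or> (\<exists>g\<in>F. g (h y) = y)" by force
        then show ?thesis using hy[of y] by (auto intro: less_imp_le)
      qed
    qed
    moreover have "(\<Union>n\<in>V. {..n}) \<in> I" using idl_fin[OF idl] V by simp
    moreover have "(\<Union>g\<in>F. {y. g (h y) = y}) \<in> I" by (rule idl_Un_fin[OF idl F]) (rule G)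
    ultimately show "{y. f y \<in> A} \<in> I" by (meson idl_un[OF idl] idl_sub[OF idl])
  qed
  ultimately show ?thesis unfolding KB_le_def by auto
qed



definition Zs :: "(nat list \<Rightarrow> bool) \<Rightarrow> nat list \<Rightarrow> nat set" where
  "Zs \<tau> q = {y. \<not> \<tau> (q @ [y])}"

lemma tall_win_D: "tall_II_winning_strategy I \<tau> \<Longrightarrow> strict_mono n \<Longrightarrow>
   infinite {n k |k. \<tau> (map n [0..<Suc k])} \<and> {n k |k. \<tau> (map n [0..<Suc k])} \<in> I"
  by (simp add: tall_II_winning_strategy_def Let_def)

lemma big_elem: assumes "infinite (S::nat set)" "finite A" shows "\<exists>y\<in>S. \<forall>x\<in>A. x < y"
proof -
  obtain y where "y > Max (insert 0 A)" "y \<in> S" using assms(1) unfolding infinite_nat_iff_unbounded by blast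
  then show ?thesis using assms(2) by (meson Max_ge finite_insert insertCI le_less_trans)
qed

lemma ext_exists:
  assumes win: "tall_II_winning_strategy I \<tau>" and p: "sorted_wrt (<) p"
  shows "\<exists>r. sorted_wrt (<) (p @ r) \<and> finite (Zs \<tau> (p @ r))"
proof (rule ccontr)
  assume H: "\<not> ?thesis"
  define nxt where "nxt q = (SOME y. y \<in> Zs \<tau> q \<and> (\<forall>x\<in>set q. x < y))" for q
  define L where "L k = ((\<lambda>q. q @ [nxt q]) ^^ k) p" for k
  have Lsuc: "L (Suc k) = L k @ [nxt (L k)]" for k by (simp add: L_def)
  have step: "nxt (p @ r) \<in> Zs \<tau> (p @ r) \<and> (\<forall>x\<in>set (p @ r). x < nxt (p @ r))"
    if "sorted_wrt (<) (p @ r)" for r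
  proof -
    have "infinite (Zs \<tau> (p @ r))" using H that by blast
    then have "\<exists>y. y \<in> Zs \<tau> (p @ r) \<and> (\<forall>x\<in>set (p @ r). x < y)" using big_elem by blast
    then show ?thesis unfolding nxt_def by (rule someI_ex)
  qed
  have inv: "(\<exists>r. L k = p @ r) \<and> sorted_wrt (<) (L k) \<and> length (L k) = length p + k" for k
  proof (induction k)
    case 0 then show ?case using p by (simp add: L_def)
  next
    case (Suc k)
    then obtain r where r: "L k = p @ r" and s: "sorted_wrt (<) (L k)" and l: "length (L k) = length p + k" by blast
    have st: "\<forall>x\<in>set (L k). x < nxt (L k)" using step[of r] r s by simp
    show ?case using r s l st unfolding Lsuc by (auto simp: sorted_wrt_append)
  qed
  have ch: "\<exists>r. L (Suc k) = L k @ r" for k using Lsuc by blast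
  have len: "\<exists>k. j < length (L k)" for j using inv[of "Suc j"] by (intro exI[of _ "Suc j"]) simp
  define n where "n = limf L"
  have sm: "strict_mono n" unfolding n_def by (rule limf_mono[where L=L, OF ch]) (use inv len in auto)
  have "{n k |k. \<tau> (map n [0..<Suc k])} \<subseteq> n ` {..<length p}"
  proof
    fix y assume "y \<in> {n k |k. \<tau> (map n [0..<Suc k])}"
    then obtain k where y: "y = n k" and t: "\<tau> (map n [0..<Suc k])" by blast
    show "y \<in> n ` {..<length p}"
    proof (cases "k < length p")
      case True then show ?thesis using y by simp
    next
      case False
      define K where "K = k - length p"
      have lK: "length (L K) = k" using inv[of K] False by (simp add: K_def)
      have "map n [0..<Suc k] = take (Suc k) (L (Suc K))"
        unfolding n_def by (rule limf_map[where L=L, OF ch]) (use lK in \<open>simp add: Lsuc\<close>)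
      also have "\<dots> = L K @ [nxt (L K)]" using lK by (simp add: Lsuc)
      finally have "\<tau> (L K @ [nxt (L K)])" using t by simp
      moreover obtain r where "L K = p @ r" using inv by blast
      moreover have "sorted_wrt (<) (L K)" using inv by blast
      ultimately show ?thesis using step[of r] by (simp add: Zs_def)
    qed
  qed
  then have "finite {n k |k. \<tau> (map n [0..<Suc k])}" using finite_subset by blast
  then show False using tall_win_D[OF win sm] by blast
qed

lemma two_one:
  assumes idl: "is_ideal UNIV I" and tw: "tall_II_wins I"
  shows "HMM_I_wins I"
proof -
  obtain \<tau> where win: "tall_II_winning_strategy I \<tau>" using tw unfolding tall_II_wins_def by blast
  define ext where "ext q = (SOME r. sorted_wrt (<) (q @ r) \<and> finite (Zs \<tau> (q @ r)))" for q
  define E where "E q = q @ ext q" for q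
  have E_ok: "sorted_wrt (<) (E q) \<and> finite (Zs \<tau> (E q))" if "sorted_wrt (<) q" for q
    unfolding E_def ext_def using ext_exists[OF win that] by (rule someI_ex)
  define pos where "pos s = foldl (\<lambda>q y. E (q @ [y])) (E []) s" for s
  define \<sigma> where "\<sigma> s = (let q = pos s in if finite (Zs \<tau> q) then Zs \<tau> q \<union> (\<Union>x\<in>set q. {..x}) else {})" for s
  have "HMM_I_winning_strategy I \<sigma>"
    unfolding HMM_I_winning_strategy_def
  proof (intro conjI allI impI)
    fix s show "finite (\<sigma> s)" by (simp add: \<sigma>_def Let_def)
  next
    fix n :: "nat \<Rightarrow> nat"
    assume legal: "\<forall>k. n k \<notin> \<sigma> (map n [0..<k])"
    define L where "L k = pos (map n [0..<k])" for k
    have Lsuc: "L (Suc k) = E (L k @ [n k])" for k by (simp add: L_def pos_def)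
    have inv: "sorted_wrt (<) (L k) \<and> finite (Zs \<tau> (L k)) \<and> k \<le> length (L k)" for k
    proof (induction k)
      case 0 then show ?case using E_ok[of "[]"] by (simp add: L_def pos_def)
    next
      case (Suc k)
      then have s: "sorted_wrt (<) (L k)" and f: "finite (Zs \<tau> (L k))" and l: "k \<le> length (L k)" by auto
      have "n k \<notin> \<sigma> (map n [0..<k])" using legal by blast
      then have nk: "n k \<notin> Zs \<tau> (L k)" "\<forall>x\<in>set (L k). x < n k"
        using f by (auto simp: \<sigma>_def L_def[symmetric] not_le Let_def)
      have s2: "sorted_wrt (<) (L k @ [n k])" using s nk by (simp add: sorted_wrt_append)
      have "length (L k @ [n k]) \<le> length (L (Suc k))" by (simp add: Lsuc E_def)
      then show ?case using E_ok[OF s2] l unfolding Lsuc by simp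
    qed
    have tauk: "\<tau> (L k @ [n k])" for k
    proof -
      have "n k \<notin> \<sigma> (map n [0..<k])" using legal by blast
      then show ?thesis using inv[of k] by (auto simp: \<sigma>_def L_def[symmetric] Zs_def Let_def)
    qed
    have ch: "\<exists>r. L (Suc k) = L k @ r" for k by (simp add: Lsuc E_def)
    have len: "\<exists>k. j < length (L k)" for j
      using inv[of "Suc j"] by (intro exI[of _ "Suc j"]) simp
    define m where "m = limf L"
    have sm: "strict_mono m" unfolding m_def by (rule limf_mono[where L=L, OF ch]) (use inv len in auto)
    have "range n \<subseteq> {m k |k. \<tau> (map m [0..<Suc k])}"
    proof
      fix y assume "y \<in> range n"
      then obtain k where y: "y = n k" by blast
      define i where "i = length (L k)"
      have pre: "take (Suc i) (L (Suc k)) = L k @ [n k]" by (simp add: Lsuc E_def i_def)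
      have "map m [0..<Suc i] = take (Suc i) (L (Suc k))"
        unfolding m_def by (rule limf_map[where L=L, OF ch]) (simp add: Lsuc E_def i_def)
      then have mm: "map m [0..<Suc i] = L k @ [n k]" using pre by simp
      then have "m i = n k" by (metis (no_types) i_def length_map length_upt diff_zero lessI nth_append_length nth_map_upt add_0)
      then show "y \<in> {m k |k. \<tau> (map m [0..<Suc k])}" using mm tauk[of k] y by (intro CollectI exI[of _ i]) simp
    qed
    then show "range n \<in> I" using tall_win_D[OF win sm] idl_sub[OF idl] by blast
  qed
  then show ?thesis unfolding HMM_I_wins_def by blast
qed


theorem mainTheorem13:
  fixes I :: "nat set set"
  assumes "is_ideal UNIV I"
  shows "(HMM_I_wins I \<longleftrightarrow> tall_II_wins I) \<and> (tall_II_wins I \<longleftrightarrow> KB_le Delta ED_fin UNIV I)"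
  using two_one[OF assms] one_three[OF assms] three_two[OF assms] by blast

end
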